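(* Let $G(x,u)=\sum_{n\ge0}\frac{u^n}{n!}G_n(x)$ and $H(x,u)=\sum_{n\ge0}\frac{u^n}{n!}H_n(x)$. Then \[H(x,u)=(1+x)\left(G(x,u)-\tfrac12G(x,u)^2\right).\]
   Context: $G_0(x)=\frac{x}{1+x}$, $H_0(x)=\frac{x(x+2)}{2(x+1)}$, and for $n\ge1$ the polynomials $G_n,H_n$ are defined by $G_1=H_1=1$, $G_{n+1}(x)=(2n+nx)G_n(x)+(1+x)^2G_n'(x)$, $H_{n+1}(x)=(2n-1+(n-1)x)H_n(x)+(1+x)^2H_n'(x)$. The identity is of formal power series in $u$ and $x$. *)

theory Defs
  imports "HOL-Computational_Algebra.Computational_Algebra"
begin

text \<open>The polynomials G_n, H_n for n \<ge> 1 (index 0 is unused: G_0, H_0 are rational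
  functions, handled separately below).\<close>

fun Gpoly :: "nat \<Rightarrow> real poly" where
  "Gpoly 0 = 0"
| "Gpoly (Suc 0) = 1"
| "Gpoly (Suc (Suc m)) =
     [: 2 * real (Suc m), real (Suc m) :] * Gpoly (Suc m)
     + [:1, 1:]^2 * pderiv (Gpoly (Suc m))"

fun Hpoly :: "nat \<Rightarrow> real poly" where
  "Hpoly 0 = 0"
| "Hpoly (Suc 0) = 1"
| "Hpoly (Suc (Suc m)) =
     [: 2 * real (Suc m) - 1, real (Suc m) - 1 :] * Hpoly (Suc m)
     + [:1, 1:]^2 * pderiv (Hpoly (Suc m))"

definition Gn :: "nat \<Rightarrow> real fps" where
  "Gn n = (if n = 0 then fps_X / (1 + fps_X) else fps_of_poly (Gpoly n))"

definition Hn :: "nat \<Rightarrow> real fps" where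
  "Hn n = (if n = 0 then fps_X * (fps_X + 2) / (2 * (fps_X + 1)) else fps_of_poly (Hpoly n))"

text \<open>Bivariate exponential generating functions: formal power series in u whose
  coefficients are formal power series in x.\<close>

definition Gser :: "real fps fps" where
  "Gser = Abs_fps (\<lambda>n. fps_const (1 / fact n) * Gn n)"

definition Hser :: "real fps fps" where
  "Hser = Abs_fps (\<lambda>n. fps_const (1 / fact n) * Hn n)"

end

theory Submission
  imports Defs
begin

definition dx :: "real fps fps \<Rightarrow> real fps fps" where
  "dx A = Abs_fps (\<lambda>n. fps_deriv (A $ n))"

lemma dx_nth[simp]: "dx A $ n = fps_deriv (A $ n)"
  by (simp add: dx_def)

lemma dx_add[simp]: "dx (A + B) = dx A + dx B"
  by (rule fps_ext) simp

lemma dx_diff[simp]: "dx (A - B) = dx A - dx B"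
  by (rule fps_ext) simp

lemma dx_mult: "dx (A * B) = dx A * B + A * dx B"
  by (rule fps_ext) (simp add: fps_mult_nth fps_deriv_sum sum.distrib add.commute)

lemma dx_const: "dx (fps_const c * A) = fps_const (fps_deriv c) * A + fps_const c * dx A"
  by (rule fps_ext) (simp add: algebra_simps)

definition P :: "real fps fps \<Rightarrow> real fps fps" where
  "P A = fps_const (2 + fps_X) * fps_X * fps_deriv A + fps_const ((1+fps_X)^2) * dx A"

lemma P_add: "P (A + B) = P A + P B"
  by (simp add: P_def algebra_simps)

lemma P_diff: "P (A - B) = P A - P B"
  by (simp add: P_def algebra_simps)

lemma P_mult: "P (A * B) = P A * B + A * P B"
  by (simp add: P_def dx_mult algebra_simps)

lemma P_const: "P (fps_const c * A) = fps_const c * P A + fps_const ((1+fps_X)^2 * fps_deriv c) * A"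
  unfolding P_def dx_const by (simp add: algebra_simps)

lemma P_nth: "P A $ n = (2 + fps_X) * of_nat n * A $ n + (1+fps_X)^2 * fps_deriv (A $ n)"
proof -
  have "(fps_const (2 + fps_X) * fps_X * fps_deriv A) $ n = (2 + fps_X) * of_nat n * A $ n"
    by (cases n) (simp_all add: mult.assoc)
  thus ?thesis by (simp add: P_def)
qed

lemma unit1X: "(1 + fps_X :: real fps) dvd a"
proof -
  have "(1 + fps_X :: real fps) dvd 1" by simp
  thus ?thesis using dvd_trans one_dvd by blast
qed

lemma G0_eq: "Gn 0 * (1 + fps_X) = fps_X"
  by (simp add: Gn_def unit1X)

lemma H0_eq: "Hn 0 * (2 * (fps_X + 1)) = fps_X * (fps_X + 2)"
proof -
  have "(2 * (fps_X + 1) :: real fps) dvd 1"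
    by (simp add: fps_is_unit_iff)
  hence "(2 * (fps_X + 1) :: real fps) dvd fps_X * (fps_X + 2)" using dvd_trans one_dvd by blast
  thus ?thesis by (simp add: Hn_def)
qed

lemma Grec: "Gn (Suc n) = (2 + fps_X) * of_nat n * Gn n + (1+fps_X)^2 * fps_deriv (Gn n)"
proof (cases n)
  case 0
  have "fps_deriv (Gn 0 * (1 + fps_X)) = 1" using G0_eq by simp
  hence "fps_deriv (Gn 0) * (1 + fps_X) + Gn 0 = 1" by (simp add: algebra_simps)
  hence e: "fps_deriv (Gn 0) * (1 + fps_X) = 1 - Gn 0" by (simp add: algebra_simps)
  have "(1+fps_X)^2 * fps_deriv (Gn 0) = (1 + fps_X) * (fps_deriv (Gn 0) * (1 + fps_X))"
    by (simp add: power2_eq_square algebra_simps)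
  also have "\<dots> = (1 + fps_X) * (1 - Gn 0)" by (simp only: e)
  also have "\<dots> = 1" using G0_eq by (simp add: algebra_simps)
  finally show ?thesis using 0 by (simp add: Gn_def)
next
  case (Suc m)
  then show ?thesis
    by (simp add: Gn_def fps_of_poly_simps fps_of_nat[symmetric] numeral_fps_const algebra_simps)
qed

lemma Hrec: "Hn (Suc n) = (2 + fps_X) * of_nat n * Hn n - (1 + fps_X) * Hn n
     + (1+fps_X)^2 * fps_deriv (Hn n)"
proof (cases n)
  case 0
  have "fps_deriv (Hn 0 * (2 * (fps_X + 1))) = 2 * fps_X + 2" using H0_eq by simp
  hence d: "fps_deriv (Hn 0) * (2 * (fps_X + 1)) + 2 * Hn 0 = 2 * fps_X + 2" by (simp add: algebra_simps)
  have "2 * ((1+fps_X)^2 * fps_deriv (Hn 0) - (1 + fps_X) * Hn 0)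
     = (1+fps_X) * (fps_deriv (Hn 0) * (2 * (fps_X + 1))) - 2 * ((1 + fps_X) * Hn 0)"
    by (simp add: power2_eq_square algebra_simps)
  also have "\<dots> = (1+fps_X) * (2 * fps_X + 2 - 2 * Hn 0) - 2 * ((1 + fps_X) * Hn 0)"
    using d by (simp add: eq_diff_eq[symmetric])
  also have "\<dots> = 2 * (1+fps_X)^2 - 2 * (Hn 0 * (2 * (fps_X + 1)))"
    by (simp add: power2_eq_square algebra_simps)
  also have "\<dots> = 2" using H0_eq by (simp add: power2_eq_square algebra_simps)
  finally have "2 * ((1+fps_X)^2 * fps_deriv (Hn 0) - (1 + fps_X) * Hn 0) = 2 * 1" by simp
  hence "(1+fps_X)^2 * fps_deriv (Hn 0) - (1 + fps_X) * Hn 0 = 1"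
    by (metis mult_left_cancel zero_neq_numeral)
  thus ?thesis using 0 by (simp add: Hn_def)
next
  case (Suc m)
  have lin: "fps_of_poly [:a, b:] = fps_const a + fps_const b * fps_X" for a b :: real
    by (simp add: fps_of_poly_pCons algebra_simps)
  have h1: "Hn (Suc n) = (fps_const (2 * real n - 1) + fps_const (real n - 1) * fps_X) * Hn n
          + (1+fps_X)^2 * fps_deriv (Hn n)"
    using Suc by (simp only: Hn_def Hpoly.simps fps_of_poly_mult fps_of_poly_add lin
       fps_of_poly_power fps_of_poly_pderiv fps_of_poly_pCons fps_of_poly_1 fps_of_poly_0
       fps_const_1_eq_1 Suc_neq_Zero if_False) simp
  have h2: "fps_const (2 * real n - 1) + fps_const (real n - 1) * fps_X
      = (2 + fps_X) * of_nat n - (1 + fps_X :: real fps)"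
  proof -
    have a: "fps_const (2 * real n - 1) = 2 * (of_nat n :: real fps) - 1"
      by (simp add: fps_of_nat[symmetric] numeral_fps_const)
    have b: "fps_const (real n - 1) = (of_nat n :: real fps) - 1"
      by (simp add: fps_of_nat[symmetric])
    show ?thesis unfolding a b by (simp add: algebra_simps)
  qed
  have "(2 + fps_X) * of_nat n * Hn n - (1 + fps_X) * Hn n
     + (1+fps_X)^2 * fps_deriv (Hn n) = ((2 + fps_X) * of_nat n - (1 + fps_X)) * Hn n
     + (1+fps_X)^2 * fps_deriv (Hn n)" by (simp add: algebra_simps)
  then show ?thesis unfolding h1 h2 by simp
qed

lemma fact_coef: "(of_nat (n+1) :: real fps) * fps_const (1 / fact (n+1)) = fps_const (1 / fact n)"
proof -
  have "real (n+1) * (1 / fact (n+1)) = 1 / fact n"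
    by (simp add: fact_Suc[of n] del: fact_Suc)
  thus ?thesis by (simp add: fps_of_nat[symmetric])
qed

lemma Gser_nth: "Gser $ n = fps_const (1 / fact n) * Gn n"
  by (simp add: Gser_def)

lemma Hser_nth: "Hser $ n = fps_const (1 / fact n) * Hn n"
  by (simp add: Hser_def)

lemma G_pde: "fps_deriv Gser = P Gser"
proof (rule fps_ext)
  fix n
  have "fps_deriv Gser $ n = (of_nat (n+1) * fps_const (1 / fact (n+1))) * Gn (Suc n)"
    by (simp add: Gser_nth mult.assoc)
  also have "\<dots> = fps_const (1 / fact n) * Gn (Suc n)" by (simp only: fact_coef)
  also have "\<dots> = P Gser $ n"
    unfolding P_nth Gser_nth Grec by (simp add: algebra_simps)
  finally show "fps_deriv Gser $ n = P Gser $ n" .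
qed

lemma H_pde: "fps_deriv Hser = P Hser - fps_const (1 + fps_X) * Hser"
proof (rule fps_ext)
  fix n
  have "fps_deriv Hser $ n = (of_nat (n+1) * fps_const (1 / fact (n+1))) * Hn (Suc n)"
    by (simp add: Hser_nth mult.assoc)
  also have "\<dots> = fps_const (1 / fact n) * Hn (Suc n)" by (simp only: fact_coef)
  also have "\<dots> = (P Hser - fps_const (1 + fps_X) * Hser) $ n"
    unfolding fps_sub_nth fps_mult_left_const_nth P_nth Hser_nth Hrec by (simp add: algebra_simps)
  finally show "fps_deriv Hser $ n = (P Hser - fps_const (1 + fps_X) * Hser) $ n" .
qed

lemma uniq:
  assumes "fps_deriv D = P D - fps_const (1 + fps_X) * D" "D $ 0 = 0"
  shows "D = 0"
proof -
  have "D $ n = 0" for n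
  proof (induction n)
    case 0 thus ?case using assms(2) by simp
  next
    case (Suc n)
    have "fps_deriv D $ n = (P D - fps_const (1 + fps_X) * D) $ n" using assms(1) by simp
    hence "of_nat (n+1) * D $ (Suc n) = 0"
      using Suc by (simp add: P_nth)
    moreover have "(of_nat (n+1) :: real fps) \<noteq> 0" by (simp only: of_nat_eq_0_iff)
    ultimately show ?case by simp
  qed
  thus ?thesis by (simp add: fps_ext)
qed

lemma init: "Hn 0 = (1 + fps_X) * (Gn 0 - fps_const (1/2) * (Gn 0)^2)"
proof -
  have nz: "(2 * (fps_X + 1) :: real fps) \<noteq> 0"
  proof
    assume "(2 * (fps_X + 1) :: real fps) = 0"
    hence "(2 * (fps_X + 1) :: real fps) $ 0 = 0" by simp
    thus False by simp
  qed
  have half: "2 * fps_const (1/2 :: real) = 1" by (simp add: numeral_fps_const)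
  have "(1 + fps_X) * (Gn 0 - fps_const (1/2) * (Gn 0)^2) * (2 * (fps_X + 1))
     = 2 * (1 + fps_X) * (Gn 0 * (1 + fps_X)) - (2 * fps_const (1/2)) * (Gn 0 * (1 + fps_X))^2"
    by (simp add: power2_eq_square algebra_simps)
  also have "\<dots> = fps_X * (fps_X + 2)" unfolding G0_eq half
    by (simp add: power2_eq_square algebra_simps)
  finally have "(1 + fps_X) * (Gn 0 - fps_const (1/2) * (Gn 0)^2) * (2 * (fps_X + 1))
     = Hn 0 * (2 * (fps_X + 1))" using H0_eq by simp
  thus ?thesis using nz by simp
qed

theorem mainTheorem7:
  shows "Hser = fps_const (1 + fps_X) *
           (Gser - fps_const (fps_const (1/2)) * Gser ^ 2)"
proof -
  define c :: "real fps fps" where "c = fps_const (fps_const (1/2))"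
  define M where "M = Gser - c * Gser ^ 2"
  define K where "K = fps_const (1 + fps_X) * M"
  have PG2: "P (Gser ^ 2) = 2 * Gser * P Gser"
    by (simp add: power2_eq_square P_mult algebra_simps)
  have dG2: "fps_deriv (Gser ^ 2) = 2 * Gser * fps_deriv Gser"
    by (simp add: power2_eq_square algebra_simps)
  have PM: "fps_deriv M = P M"
    unfolding M_def c_def by (simp add: P_diff P_const PG2 dG2 G_pde)
  have PK: "P K = fps_const (1 + fps_X) * P M + fps_const ((1 + fps_X)^2) * M"
    unfolding K_def by (simp add: P_const)
  have dK: "fps_deriv K = P K - fps_const (1 + fps_X) * K"
  proof -
    have "fps_deriv K = fps_const (1 + fps_X) * P M" by (simp add: K_def PM)
    also have "\<dots> = P K - fps_const (1 + fps_X) * K"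
      unfolding PK by (simp add: K_def power2_eq_square mult.assoc)
    finally show ?thesis .
  qed
  have "Hser - K = 0"
  proof (rule uniq)
    show "fps_deriv (Hser - K) = P (Hser - K) - fps_const (1 + fps_X) * (Hser - K)"
      by (simp add: H_pde dK P_diff algebra_simps)
    show "(Hser - K) $ 0 = 0"
      unfolding K_def M_def c_def using init
      by (simp add: Hser_nth Gser_nth power2_eq_square)
  qed
  thus ?thesis unfolding K_def M_def c_def by simp
qed

end
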